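(* The collinearity graph of $\mathbb{S}$ is connected and has diameter $3$.
   Context: Let $S=(P,L)$ and $S'=(P',L')$ be generalized quadrangles of order $(2,2)$ (every line has 3 points, every point lies on 3 lines, and for each point $x$ and line $l\not\ni x$ exactly one point of $l$ is collinear with $x$), with an isomorphism $x\mapsto x'$ from $S$ to $S'$. In a point-line geometry, $x^{\perp}$ is $x$ together with all points collinear with $x$, and $A^{\perp}=\bigcap_{a\in A}a^{\perp}$. A triad is a set of three pairwise non-collinear points, complete if $|T^{\perp}|=3$. Let $\mathcal{P}=\{(x,y')\in P\times P':y'\in x'^{\perp}\}$ and $\mathcal{L}$ the set of all $3$-subsets $\{(x,u'),(y,v'),(z,w')\}$ of $\mathcal{P}$ where $T=\{x,y,z\}$ (three distinct points) is a line or complete triad of $S$ and $\{u',v',w'\}=T'^{\perp}$ in $S'$ with $u',v',w'$ distinct. The geometry $\mathbb{S}=(\mathbb{P},\mathbb{L})$ has point set $\mathbb{P}=\mathcal{P}\cup P\cup P'$ (disjoint union) and line set $\mathcal{L}\cup\{\{x,(x,u'),u'\}:(x,u')\in\mathcal{P}\}$. *)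

theory Defs
  imports Main
begin

definition collinear :: "'a set set \<Rightarrow> 'a \<Rightarrow> 'a \<Rightarrow> bool" where
  "collinear L x y \<longleftrightarrow> (\<exists>l\<in>L. x \<in> l \<and> y \<in> l)"

definition perp :: "'a set \<Rightarrow> 'a set set \<Rightarrow> 'a \<Rightarrow> 'a set" where
  "perp P L x = insert x {y \<in> P. collinear L x y}"

definition perp_set :: "'a set \<Rightarrow> 'a set set \<Rightarrow> 'a set \<Rightarrow> 'a set" where
  "perp_set P L A = {y \<in> P. \<forall>a\<in>A. y \<in> perp P L a}"

definition triad :: "'a set \<Rightarrow> 'a set set \<Rightarrow> 'a set \<Rightarrow> bool" where
  "triad P L T \<longleftrightarrow> T \<subseteq> P \<and> card T = 3 \<and>
     (\<forall>a\<in>T. \<forall>b\<in>T. a \<noteq> b \<longrightarrow> \<not> collinear L a b)"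

definition complete_triad :: "'a set \<Rightarrow> 'a set set \<Rightarrow> 'a set \<Rightarrow> bool" where
  "complete_triad P L T \<longleftrightarrow> triad P L T \<and> card (perp_set P L T) = 3"

definition gq22 :: "'a set \<Rightarrow> 'a set set \<Rightarrow> bool" where
  "gq22 P L \<longleftrightarrow> P \<noteq> {} \<and>
     (\<forall>l\<in>L. l \<subseteq> P \<and> card l = 3) \<and>
     (\<forall>x\<in>P. card {l\<in>L. x \<in> l} = 3) \<and>
     (\<forall>x\<in>P. \<forall>l\<in>L. x \<notin> l \<longrightarrow> (\<exists>!y. y \<in> l \<and> collinear L x y))"

definition gq_iso :: "('a \<Rightarrow> 'b) \<Rightarrow> 'a set \<Rightarrow> 'a set set \<Rightarrow> 'b set \<Rightarrow> 'b set set \<Rightarrow> bool" where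
  "gq_iso f P L P' L' \<longleftrightarrow> bij_betw f P P' \<and> (\<lambda>l. f ` l) ` L = L'"

text \<open>Points of the new geometry: disjoint union of the pairs, P and P'.\<close>
datatype ('a, 'b) bpt = BPair 'a 'b | BLeft 'a | BRight 'b

definition calP :: "('a \<Rightarrow> 'b) \<Rightarrow> 'a set \<Rightarrow> 'b set \<Rightarrow> 'b set set \<Rightarrow> ('a \<times> 'b) set" where
  "calP f P P' L' = {(x, y). x \<in> P \<and> y \<in> P' \<and> y \<in> perp P' L' (f x)}"

definition calL :: "('a \<Rightarrow> 'b) \<Rightarrow> 'a set \<Rightarrow> 'a set set \<Rightarrow> 'b set \<Rightarrow> 'b set set
    \<Rightarrow> ('a \<times> 'b) set set" where
  "calL f P L P' L' = {{(x, u), (y, v), (z, w)} | x y z u v w.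
     (x, u) \<in> calP f P P' L' \<and> (y, v) \<in> calP f P P' L' \<and> (z, w) \<in> calP f P P' L' \<and>
     x \<noteq> y \<and> x \<noteq> z \<and> y \<noteq> z \<and>
     ({x, y, z} \<in> L \<or> complete_triad P L {x, y, z}) \<and>
     u \<noteq> v \<and> u \<noteq> w \<and> v \<noteq> w \<and>
     {u, v, w} = perp_set P' L' (f ` {x, y, z})}"

definition bbP :: "('a \<Rightarrow> 'b) \<Rightarrow> 'a set \<Rightarrow> 'b set \<Rightarrow> 'b set set \<Rightarrow> ('a, 'b) bpt set" where
  "bbP f P P' L' = (\<lambda>(x, y). BPair x y) ` calP f P P' L' \<union> BLeft ` P \<union> BRight ` P'"

definition bbL :: "('a \<Rightarrow> 'b) \<Rightarrow> 'a set \<Rightarrow> 'a set set \<Rightarrow> 'b set \<Rightarrow> 'b set set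
    \<Rightarrow> ('a, 'b) bpt set set" where
  "bbL f P L P' L' =
     (\<lambda>S. (\<lambda>(x, y). BPair x y) ` S) ` calL f P L P' L' \<union>
     {{BLeft x, BPair x u, BRight u} | x u. (x, u) \<in> calP f P P' L'}"

definition coll_graph :: "'a set \<Rightarrow> 'a set set \<Rightarrow> ('a \<times> 'a) set" where
  "coll_graph P L = {(a, b). a \<in> P \<and> b \<in> P \<and> a \<noteq> b \<and> collinear L a b}"

definition graph_connected :: "'a set \<Rightarrow> ('a \<times> 'a) set \<Rightarrow> bool" where
  "graph_connected V E \<longleftrightarrow> (\<forall>a\<in>V. \<forall>b\<in>V. (a, b) \<in> E\<^sup>*)"

definition dist_le :: "('a \<times> 'a) set \<Rightarrow> nat \<Rightarrow> 'a \<Rightarrow> 'a \<Rightarrow> bool" where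
  "dist_le E n a b \<longleftrightarrow> (\<exists>k\<le>n. (a, b) \<in> E ^^ k)"

definition graph_diameter :: "'a set \<Rightarrow> ('a \<times> 'a) set \<Rightarrow> nat \<Rightarrow> bool" where
  "graph_diameter V E d \<longleftrightarrow> (\<forall>a\<in>V. \<forall>b\<in>V. dist_le E d a b) \<and>
     (\<exists>a\<in>V. \<exists>b\<in>V. \<not> dist_le E (d - 1) a b)"

end

theory Submission imports Defs begin

locale gq =
  fixes P :: "'a set" and L :: "'a set set"
  assumes gq: "gq22 P L"
begin

lemma ax1: "\<forall>l\<in>L. l \<subseteq> P \<and> card l = 3" using gq by (simp add: gq22_def)
lemma ax2: "\<forall>x\<in>P. card {l\<in>L. x \<in> l} = 3" using gq by (simp add: gq22_def)
lemma ax3: "\<forall>x\<in>P. \<forall>l\<in>L. x \<notin> l \<longrightarrow> (\<exists>!y. y \<in> l \<and> collinear L x y)" using gq by (simp add: gq22_def)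
lemma line_sub: "l \<in> L \<Longrightarrow> l \<subseteq> P" using ax1 by simp
lemma line_card: "l \<in> L \<Longrightarrow> card l = 3" using ax1 by simp
lemma line_fin: "l \<in> L \<Longrightarrow> finite l"
proof (rule ccontr)
  assume a: "l \<in> L" "\<not> finite l"
  have "card l = 3" using line_card a(1) .
  moreover have "card l = 0" using a(2) by (rule card.infinite)
  ultimately show False by simp
qed
lemma lines_card: "x \<in> P \<Longrightarrow> card {l\<in>L. x\<in>l} = 3" using ax2 by simp
lemma lines_fin: "x \<in> P \<Longrightarrow> finite {l\<in>L. x\<in>l}"
proof (rule ccontr)
  assume a: "x \<in> P" "\<not> finite {l\<in>L. x\<in>l}"
  have "card {l\<in>L. x\<in>l} = 3" using lines_card a(1) .
  moreover have "card {l\<in>L. x\<in>l} = 0" using a(2) by (rule card.infinite)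
  ultimately show False by simp
qed
lemma uniq: "\<lbrakk>x\<in>P; l\<in>L; x\<notin>l; y1\<in>l; y2\<in>l; collinear L x y1; collinear L x y2\<rbrakk> \<Longrightarrow> y1 = y2"
proof -
  assume a: "x\<in>P" "l\<in>L" "x\<notin>l" "y1\<in>l" "y2\<in>l" "collinear L x y1" "collinear L x y2"
  have "\<exists>!y. y \<in> l \<and> collinear L x y" using ax3 a by simp
  then show ?thesis using a unfolding Ex1_def by blast
qed
lemma ex: "\<lbrakk>x\<in>P; l\<in>L; x\<notin>l\<rbrakk> \<Longrightarrow> \<exists>y\<in>l. collinear L x y"
proof -
  assume a: "x\<in>P" "l\<in>L" "x\<notin>l"
  have "\<exists>!y. y \<in> l \<and> collinear L x y" using ax3 a by simp
  then show ?thesis unfolding Ex1_def by blast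
qed
lemma col_sym: "collinear L x y \<Longrightarrow> collinear L y x" unfolding collinear_def by blast
lemma col_P1: "collinear L x y \<Longrightarrow> x\<in>P" unfolding collinear_def using line_sub by blast
lemma col_P2: "collinear L x y \<Longrightarrow> y\<in>P" unfolding collinear_def using line_sub by blast
lemma col_line: "l\<in>L \<Longrightarrow> x\<in>l \<Longrightarrow> y\<in>l \<Longrightarrow> collinear L x y" unfolding collinear_def by blast
lemma col_obtain: "collinear L x y \<Longrightarrow> \<exists>l\<in>L. x\<in>l \<and> y\<in>l" unfolding collinear_def by blast
lemma line_through: "x\<in>P \<Longrightarrow> \<exists>l\<in>L. x\<in>l"
proof -
  assume x: "x\<in>P"
  have "{l\<in>L. x\<in>l} \<noteq> {}" using lines_card[OF x] by (metis card.empty zero_neq_numeral)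
  then show ?thesis by blast
qed
lemma col_refl: "x\<in>P \<Longrightarrow> collinear L x x" using line_through col_line by blast

lemma card3_eq: "card m = 3 \<Longrightarrow> a\<in>m \<Longrightarrow> b\<in>m \<Longrightarrow> c\<in>m \<Longrightarrow> a\<noteq>b \<Longrightarrow> a\<noteq>c \<Longrightarrow> b\<noteq>c \<Longrightarrow> m = {a,b,c}"
proof -
  assume a: "card m = 3" "a\<in>m" "b\<in>m" "c\<in>m" "a\<noteq>b" "a\<noteq>c" "b\<noteq>c"
  have fin: "finite m"
  proof (rule ccontr)
    assume "\<not> finite m" then have "card m = 0" by (rule card.infinite)
    then show False using a(1) by simp
  qed
  have sub: "{a,b,c} \<subseteq> m" using a by blast
  have "card {a,b,c} = 3" using a by simp
  then have "{a,b,c} = m" using card_subset_eq[OF fin sub] a(1) by simp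
  then show ?thesis by simp
qed

lemma card3_third: "card m = 3 \<Longrightarrow> \<exists>c\<in>m. c\<noteq>a \<and> c\<noteq>b"
proof (rule ccontr)
  assume c: "card m = 3" and n: "\<not> (\<exists>c\<in>m. c\<noteq>a \<and> c\<noteq>b)"
  hence "m \<subseteq> {a,b}" by blast
  hence "card m \<le> card {a,b}" by (simp add: card_mono)
  also have "\<dots> \<le> 2" by (cases "a=b") auto
  finally show False using c by simp
qed

lemma two_lines_eq: "\<lbrakk>l\<in>L; m\<in>L; p\<noteq>q; p\<in>l; q\<in>l; p\<in>m; q\<in>m\<rbrakk> \<Longrightarrow> l = m"
proof (rule ccontr)
  assume a: "l\<in>L" "m\<in>L" "p\<noteq>q" "p\<in>l" "q\<in>l" "p\<in>m" "q\<in>m" "l \<noteq> m"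
  have "\<not> m \<subseteq> l"
  proof
    assume "m \<subseteq> l"
    then have "m = l" using card_subset_eq[of l m] line_fin line_card a by simp
    then show False using a by simp
  qed
  then obtain r where r: "r\<in>m" "r\<notin>l" by blast
  have "r \<in> P" using r a line_sub by blast
  have "collinear L r p" "collinear L r q" using col_line a r by auto
  then show False using uniq[of r l p q] a r \<open>r\<in>P\<close> by blast
qed

lemma perp_pair_line: "\<lbrakk>l\<in>L; p\<noteq>q; p\<in>l; q\<in>l; collinear L w p; collinear L w q\<rbrakk> \<Longrightarrow> w\<in>l"
  using uniq[of w l p q] col_P1 by blast

lemma noncol_common: "\<lbrakk>\<not> collinear L x y; collinear L a x; collinear L a y; collinear L b x; collinear L b y; a\<noteq>b\<rbrakk>
   \<Longrightarrow> \<not> collinear L a b"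
proof
  assume a: "\<not> collinear L x y" "collinear L a x" "collinear L a y" "collinear L b x" "collinear L b y" "a\<noteq>b"
    and c: "collinear L a b"
  then obtain l where l: "l\<in>L" "a\<in>l" "b\<in>l" using col_obtain by blast
  have "x\<in>l" using perp_pair_line[of l a b x] l a col_sym by blast
  have "y\<in>l" using perp_pair_line[of l a b y] l a col_sym by blast
  show False using a(1) col_line l \<open>x\<in>l\<close> \<open>y\<in>l\<close> by blast
qed

lemma two_point: "x\<in>P \<Longrightarrow> y\<in>P \<Longrightarrow> \<exists>w. collinear L x w \<and> collinear L y w"
proof -
  assume x: "x\<in>P" and y: "y\<in>P"
  show ?thesis
  proof (cases "collinear L x y")
    case True then show ?thesis using col_refl y by blast
  next
    case False
    obtain l where l: "l\<in>L" "y\<in>l" using line_through y by blast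
    have "x \<notin> l" using False l col_line by blast
    then obtain w where "w\<in>l" "collinear L x w" using ex x l by blast
    then show ?thesis using col_line l by blast
  qed
qed

lemma nbr_card: assumes x: "x\<in>P" and y: "y\<in>P" and n: "\<not> collinear L x y"
  shows "card {w. collinear L x w \<and> collinear L y w} = 3"
proof -
  define Lx where "Lx = {l\<in>L. x\<in>l}"
  define g where "g l = (THE w. w \<in> l \<and> collinear L y w)" for l
  have gl: "g l \<in> l \<and> collinear L y (g l)" if "l \<in> Lx" for l
  proof -
    have "y \<notin> l" using that n col_line unfolding Lx_def by blast
    then have "\<exists>!w. w \<in> l \<and> collinear L y w" using ex[of y l] uniq[of y l] y that unfolding Lx_def by blast
    then show ?thesis unfolding g_def by (rule theI')
  qed
  have S: "{w. collinear L x w \<and> collinear L y w} = g ` Lx"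
  proof
    show "g ` Lx \<subseteq> {w. collinear L x w \<and> collinear L y w}"
      using gl col_line unfolding Lx_def by blast
  next
    show "{w. collinear L x w \<and> collinear L y w} \<subseteq> g ` Lx"
    proof
      fix w assume w: "w \<in> {w. collinear L x w \<and> collinear L y w}"
      then obtain l where l: "l\<in>L" "x\<in>l" "w\<in>l" using col_obtain by blast
      have "l \<in> Lx" using l unfolding Lx_def by blast
      have "y \<notin> l" using l n col_line by blast
      have "g l = w" using gl[OF \<open>l\<in>Lx\<close>] uniq[of y l "g l" w] y l \<open>y\<notin>l\<close> w by blast
      then show "w \<in> g ` Lx" using \<open>l\<in>Lx\<close> by blast
    qed
  qed
  have "inj_on g Lx"
  proof
    fix l1 l2 assume a: "l1 \<in> Lx" "l2 \<in> Lx" "g l1 = g l2"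
    have "g l1 \<noteq> x" using gl[OF a(1)] n col_sym by metis
    then show "l1 = l2" using two_lines_eq[of l1 l2 x "g l1"] gl a unfolding Lx_def by force
  qed
  then have "card (g ` Lx) = card Lx" by (rule card_image)
  then show ?thesis using S lines_card[OF x] unfolding Lx_def by simp
qed


lemma three_noncol:
  assumes x: "x\<in>P" and y: "y\<in>P" and z: "z\<in>P"
    and nxy: "\<not> collinear L x y" and nxz: "\<not> collinear L x z" and nyz: "\<not> collinear L y z"
  shows "\<exists>c. collinear L c x \<and> collinear L c y \<and> collinear L c z"
proof (rule ccontr)
  assume H: "\<not> ?thesis"
  have H': "\<not> collinear L c z" if "collinear L c x" "collinear L c y" for c using H that by blast
  obtain l1 l2 l3 where l123: "{l\<in>L. x\<in>l} = {l1,l2,l3}" "l1\<noteq>l2" "l2\<noteq>l3" "l1\<noteq>l3"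
    using lines_card[OF x] unfolding card_3_iff by blast
  have ls: "l1\<in>L" "l2\<in>L" "l3\<in>L" "x\<in>l1" "x\<in>l2" "x\<in>l3" using l123(1) by blast+
  have "y \<notin> l1" using nxy col_line ls by blast
  then obtain q1 where q1: "q1 \<in> l1" "collinear L y q1" using ex y ls by blast
  have q1x: "collinear L q1 x" using col_line ls q1 by blast
  have q1y: "collinear L q1 y" using col_sym q1 by blast
  have q1z: "\<not> collinear L q1 z" using H' q1x q1y by blast
  have q1P: "q1 \<in> P" using col_P1 q1x by blast
  obtain m1 where m1: "m1\<in>L" "y\<in>m1" "q1\<in>m1" using col_obtain q1(2) by blast
  have "z \<notin> m1" using nyz col_line m1 by blast
  then obtain r where r: "r\<in>m1" "collinear L z r" using ex z m1 by blast
  have rny: "r \<noteq> y" using r nyz col_sym by blast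
  have rnq: "r \<noteq> q1" using r q1z col_sym by blast
  have zr: "z \<noteq> r" using r \<open>z\<notin>m1\<close> by blast
  have ynq: "y \<noteq> q1" using \<open>y\<notin>l1\<close> q1 by blast
  have m1eq: "m1 = {y,q1,r}" using card3_eq[OF line_card[OF m1(1)]] m1 r rny rnq ynq by blast
  have step: "collinear L p r \<and> p \<noteq> x" if l: "l \<in> L" "x \<in> l" "l \<noteq> l1" and p: "p \<in> l" "collinear L z p" for l p
  proof -
    have pnx: "p \<noteq> x" using p nxz col_sym by blast
    have pny: "\<not> collinear L p y"
    proof
      assume "collinear L p y"
      moreover have "collinear L p x" using col_line l p by blast
      ultimately show False using H' p(2) col_sym by blast
    qed
    have q1l: "q1 \<notin> l"
    proof
      assume "q1 \<in> l"
      then have "l = l1" using two_lines_eq[of l l1 x q1] l ls q1 q1x nxy q1(2) ynq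
        by (metis col_sym)
      then show False using l by simp
    qed
    have pq1: "\<not> collinear L p q1"
    proof
      assume "collinear L p q1"
      then have "collinear L q1 p" by (rule col_sym)
      then have "x = p" using uniq[of q1 l x p] q1P l q1l p q1x by blast
      then show False using pnx by simp
    qed
    have "p \<notin> m1" using pny col_line m1 by blast
    moreover have pP: "p \<in> P" using p(1) l(1) line_sub by blast
    ultimately obtain s where s: "s \<in> m1" "collinear L p s" using ex m1 by blast
    have "s \<noteq> y" using s pny by blast
    moreover have "s \<noteq> q1" using s pq1 by blast
    ultimately have "s = r" using s m1eq by blast
    then show ?thesis using s pnx by simp
  qed
  have "z \<notin> l2" using nxz col_line ls by blast
  then obtain p2 where p2: "p2 \<in> l2" "collinear L z p2" using ex z ls by blast
  have "z \<notin> l3" using nxz col_line ls by blast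
  then obtain p3 where p3: "p3 \<in> l3" "collinear L z p3" using ex z ls by blast
  have s2: "collinear L p2 r" "p2 \<noteq> x" using step[of l2 p2] ls l123 p2 by auto
  have s3: "collinear L p3 r" "p3 \<noteq> x" using step[of l3 p3] ls l123 p3 by auto
  have p3P: "p3 \<in> P" using p3 ls line_sub by blast
  have p2P: "p2 \<in> P" using p2 ls line_sub by blast
  have n23: "\<not> collinear L p2 p3"
  proof
    assume c: "collinear L p2 p3"
    have "p3 \<notin> l2" using two_lines_eq[of l2 l3 x p3] ls p3 s3 l123 by metis
    moreover have "collinear L p3 x" using col_line ls p3 by blast
    ultimately have "x = p2" using uniq[of p3 l2 x p2] p3P ls p2 c col_sym by blast
    then show False using s2 by simp
  qed
  obtain n where n: "n\<in>L" "z\<in>n" "r\<in>n" using col_obtain r(2) by blast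
  show False
  proof (cases "p2 \<in> n")
    case True
    then have "p3 \<notin> n" using n23 col_line n by blast
    then show False using uniq[of p3 n z r] p3P n zr p3 s3 col_sym by blast
  next
    case False
    then show False using uniq[of p2 n z r] p2P n zr p2 s2 col_sym by blast
  qed
qed

lemma via_line: assumes "collinear L u v" "b \<in> P"
  shows "\<exists>a. collinear L a u \<and> collinear L a v \<and> collinear L a b"
proof -
  obtain m where m: "m\<in>L" "u\<in>m" "v\<in>m" using col_obtain assms(1) by blast
  show ?thesis
  proof (cases "b \<in> m")
    case True then show ?thesis using col_line m col_refl assms(2) by blast
  next
    case False
    then obtain a where "a\<in>m" "collinear L b a" using ex assms(2) m by blast
    then show ?thesis using col_line m col_sym by blast
  qed
qed

lemma three_point: assumes "u\<in>P" "v\<in>P" "b\<in>P"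
  shows "\<exists>a. collinear L a u \<and> collinear L a v \<and> collinear L a b"
proof -
  consider "collinear L u v" | "collinear L u b" | "collinear L v b"
    | "\<not> collinear L u v" "\<not> collinear L u b" "\<not> collinear L v b" by blast
  then show ?thesis
  proof cases
    case 1 then show ?thesis using via_line assms by blast
  next
    case 2 then show ?thesis using via_line[of u b v] assms by blast
  next
    case 3 then show ?thesis using via_line[of v b u] assms by blast
  next
    case 4 then show ?thesis using three_noncol assms by blast
  qed
qed

lemma regular:
  assumes nxy: "\<not> collinear L x y" and ax: "collinear L a x" and ay: "collinear L a y"
    and bx: "collinear L b x" and by': "collinear L b y" and cx: "collinear L c x" and cy: "collinear L c y"
    and ab: "a\<noteq>b" and ac: "a\<noteq>c" and bc: "b\<noteq>c"
    and nzx: "\<not> collinear L z x" and nzy: "\<not> collinear L z y"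
    and za: "collinear L z a" and zb: "collinear L z b"
  shows "collinear L z c"
proof (rule ccontr)
  assume nzc: "\<not> collinear L z c"
  have zP: "z \<in> P" using za col_P1 by blast
  have aP: "a \<in> P" using ax col_P1 by blast
  have bP: "b \<in> P" using bx col_P1 by blast
  have cP: "c \<in> P" using cx col_P1 by blast
  have nab: "\<not> collinear L a b" using noncol_common[OF nxy ax ay bx by' ab] .
  have nac: "\<not> collinear L a c" using noncol_common[OF nxy ax ay cx cy ac] .
  have nbc: "\<not> collinear L b c" using noncol_common[OF nxy bx by' cx cy bc] .
  obtain l where l: "l\<in>L" "x\<in>l" "c\<in>l" using col_obtain cx by blast
  have "z \<notin> l" using nzx col_line l by blast
  then obtain c1 where c1: "c1\<in>l" "collinear L z c1" using ex zP l by blast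
  have c1x: "c1 \<noteq> x" using c1 nzx by blast
  have c1c: "c1 \<noteq> c" using c1 nzc by blast
  obtain m where m: "m\<in>L" "y\<in>m" "c\<in>m" using col_obtain cy by blast
  have "z \<notin> m" using nzy col_line m by blast
  then obtain c2 where c2: "c2\<in>m" "collinear L z c2" using ex zP m by blast
  have c2y: "c2 \<noteq> y" using c2 nzy by blast
  have c2c: "c2 \<noteq> c" using c2 nzc by blast
  have far: "\<not> collinear L d e" if "collinear L d w" "d \<notin> n" "n\<in>L" "w\<in>n" "e\<in>n" "e\<noteq>w" for d e w n
  proof
    assume "collinear L d e"
    then have "w = e" using uniq[of d n w e] that col_P1 by blast
    then show False using that by simp
  qed
  have "a \<notin> l" using nac col_line l by blast
  then have nac1: "\<not> collinear L a c1" using far[of a x l c1] ax l c1 c1x by blast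
  have "b \<notin> l" using nbc col_line l by blast
  then have nbc1: "\<not> collinear L b c1" using far[of b x l c1] bx l c1 c1x by blast
  have "a \<notin> m" using nac col_line m by blast
  then have nac2: "\<not> collinear L a c2" using far[of a y m c2] ay m c2 c2y by blast
  have "b \<notin> m" using nbc col_line m by blast
  then have nbc2: "\<not> collinear L b c2" using far[of b y m c2] by' m c2 c2y by blast
  have c12: "c1 \<noteq> c2"
  proof
    assume "c1 = c2"
    then have "l = m" using two_lines_eq[of l m c c1] l m c1 c2 c1c by metis
    then show False using nxy col_line l m by blast
  qed
  have nc12: "\<not> collinear L c1 c2"
  proof
    assume "collinear L c1 c2"
    then obtain k where k: "k\<in>L" "c1\<in>k" "c2\<in>k" using col_obtain by blast
    show False
    proof (cases "c \<in> k")
      case True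
      then have "k = l" using two_lines_eq[of k l c c1] k l c1 c1c by metis
      then have "c2 \<in> l" using k by simp
      then have "collinear L c2 x" "collinear L c2 y" "collinear L c2 c" using col_line l m c2 by blast+
      then show False using noncol_common[OF nxy _ _ cx cy c2c] by blast
    next
      case False
      have "collinear L c c1" "collinear L c c2" using col_line l m c1 c2 by blast+
      then show False using uniq[of c k c1 c2] cP k False c12 by blast
    qed
  qed
  obtain na where na: "na\<in>L" "z\<in>na" "a\<in>na" using col_obtain za by blast
  obtain nb where nb: "nb\<in>L" "z\<in>nb" "b\<in>nb" using col_obtain zb by blast
  obtain n1 where n1: "n1\<in>L" "z\<in>n1" "c1\<in>n1" using col_obtain c1(2) by blast
  obtain n2 where n2: "n2\<in>L" "z\<in>n2" "c2\<in>n2" using col_obtain c2(2) by blast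
  have d: "na \<noteq> nb" "na \<noteq> n1" "na \<noteq> n2" "nb \<noteq> n1" "nb \<noteq> n2" "n1 \<noteq> n2"
    using col_line na nb n1 n2 nab nac1 nac2 nbc1 nbc2 nc12 by blast+
  have sub: "{na,nb,n1,n2} \<subseteq> {l\<in>L. z\<in>l}" using na nb n1 n2 by blast
  have "card {na,nb,n1,n2} = 4" using d by simp
  moreover have "card {na,nb,n1,n2} \<le> 3" using card_mono[OF lines_fin[OF zP] sub] lines_card[OF zP] by simp
  ultimately show False by simp
qed

lemma noncol_exists: assumes x: "x\<in>P" shows "\<exists>z\<in>P. \<not> collinear L x z"
proof -
  obtain l where l: "l\<in>L" "x\<in>l" using line_through x by blast
  obtain y where y: "y\<in>l" "y\<noteq>x" using card3_third[OF line_card[OF l(1)], of x x] by blast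
  have yP: "y\<in>P" using y l line_sub by blast
  obtain m where m: "m \<in> {l\<in>L. y\<in>l}" "m \<noteq> l" using card3_third[OF lines_card[OF yP], of l l] by blast
  obtain z where z: "z\<in>m" "z\<noteq>y" using card3_third[OF line_card, of m y y] m by blast
  have zP: "z\<in>P" using z m line_sub by blast
  have "z \<notin> l"
  proof
    assume "z\<in>l" then have "l = m" using two_lines_eq[of l m y z] l m y z by blast
    then show False using m by simp
  qed
  have "collinear L z y" using col_line m z by blast
  have "\<not> collinear L x z"
  proof
    assume "collinear L x z"
    then have "x = y" using uniq[of z l x y] zP l \<open>z\<notin>l\<close> y \<open>collinear L z y\<close> col_sym by blast
    then show False using y by simp
  qed
  then show ?thesis using zP by blast
qed


lemma perp_mem: "a \<in> P \<Longrightarrow> w \<in> perp P L a \<longleftrightarrow> w \<in> P \<and> collinear L a w"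
  unfolding perp_def using col_refl by auto

lemma perp_set_eq: "T \<subseteq> P \<Longrightarrow> perp_set P L T = {w\<in>P. \<forall>a\<in>T. collinear L a w}"
  unfolding perp_set_def using perp_mem by blast

lemma perp_set_line: assumes l: "l \<in> L" shows "perp_set P L l = l"
proof -
  have lP: "l \<subseteq> P" using line_sub l .
  have "{w\<in>P. \<forall>a\<in>l. collinear L a w} = l"
  proof
    show "l \<subseteq> {w\<in>P. \<forall>a\<in>l. collinear L a w}" using lP col_line l by blast
  next
    obtain p where p: "p \<in> l" using card3_third[OF line_card[OF l], of undefined undefined] by blast
    obtain q where q: "q \<in> l" "q \<noteq> p" using card3_third[OF line_card[OF l], of p p] by blast
    show "{w\<in>P. \<forall>a\<in>l. collinear L a w} \<subseteq> l"
      using perp_pair_line[OF l q(2)[symmetric] p q(1)] p q col_sym by blast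
  qed
  then show ?thesis using perp_set_eq[OF lP] by simp
qed

end


locale two = S: gq P L + T: gq P' L'
  for P :: "'a set" and L :: "'a set set" and P' :: "'b set" and L' :: "'b set set" +
  fixes f :: "'a \<Rightarrow> 'b"
  assumes iso: "gq_iso f P L P' L'"
begin

abbreviation "BP \<equiv> bbP f P P' L'"
abbreviation "BL \<equiv> bbL f P L P' L'"
abbreviation "E \<equiv> coll_graph BP BL"
abbreviation "CP \<equiv> calP f P P' L'"

lemma bij: "bij_betw f P P'" using iso unfolding gq_iso_def by (rule conjunct1)
lemma linesI: "(\<lambda>l. f ` l) ` L = L'" using iso unfolding gq_iso_def by (rule conjunct2)
lemma fP: "x \<in> P \<Longrightarrow> f x \<in> P'" using bij by (rule bij_betw_apply)
lemma finj: "inj_on f P" using bij by (rule bij_betw_imp_inj_on)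
lemma fimg: "f ` P = P'" using bij by (rule bij_betw_imp_surj_on)
lemma fsurj: "u \<in> P' \<Longrightarrow> \<exists>x\<in>P. f x = u" using fimg by (metis imageE)
lemma line_img: "l \<in> L \<Longrightarrow> f ` l \<in> L'"
proof -
  assume "l \<in> L"
  then have "(\<lambda>l. f ` l) l \<in> (\<lambda>l. f ` l) ` L" by (rule imageI)
  then show ?thesis using linesI by simp
qed
lemma line_pre: "l' \<in> L' \<Longrightarrow> \<exists>l\<in>L. l' = f ` l"
proof -
  assume "l' \<in> L'"
  then have "l' \<in> (\<lambda>l. f ` l) ` L" using linesI by simp
  then show ?thesis by (rule imageE) blast
qed

lemma col_iff: assumes "x\<in>P" "y\<in>P" shows "collinear L' (f x) (f y) \<longleftrightarrow> collinear L x y"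
proof
  assume "collinear L x y"
  then obtain l where "l\<in>L" "x\<in>l" "y\<in>l" using S.col_obtain by blast
  then show "collinear L' (f x) (f y)" using line_img T.col_line by blast
next
  assume "collinear L' (f x) (f y)"
  then obtain l' where l': "l'\<in>L'" "f x\<in>l'" "f y\<in>l'" using T.col_obtain by blast
  then obtain l where l: "l\<in>L" "l' = f ` l" using line_pre by blast
  have lP: "l \<subseteq> P" using S.line_sub l(1) .
  have "x \<in> l" using l l' lP finj assms(1) by (auto dest: inj_onD)
  moreover have "y \<in> l" using l l' lP finj assms(2) by (auto dest: inj_onD)
  ultimately show "collinear L x y" using S.col_line l(1) by blast
qed

lemma calP_iff: "(x,u) \<in> CP \<longleftrightarrow> x\<in>P \<and> u\<in>P' \<and> collinear L' (f x) u"
proof -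
  have "(x,u) \<in> CP \<longleftrightarrow> x\<in>P \<and> u\<in>P' \<and> u \<in> perp P' L' (f x)" unfolding calP_def by simp
  then show ?thesis using T.perp_mem fP by blast
qed

lemma perp_set_img: assumes TP: "Tr \<subseteq> P"
  shows "f ` perp_set P L Tr = perp_set P' L' (f ` Tr)"
proof -
  have fTP: "f ` Tr \<subseteq> P'" using TP fP by blast
  have "f ` {w\<in>P. \<forall>a\<in>Tr. collinear L a w} = {w\<in>P'. \<forall>a\<in>f ` Tr. collinear L' a w}"
  proof
    show "f ` {w\<in>P. \<forall>a\<in>Tr. collinear L a w} \<subseteq> {w\<in>P'. \<forall>a\<in>f ` Tr. collinear L' a w}"
      using col_iff fP TP by blast
  next
    show "{w\<in>P'. \<forall>a\<in>f ` Tr. collinear L' a w} \<subseteq> f ` {w\<in>P. \<forall>a\<in>Tr. collinear L a w}"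
    proof
      fix w assume w: "w \<in> {w\<in>P'. \<forall>a\<in>f ` Tr. collinear L' a w}"
      then obtain y where y: "y\<in>P" "f y = w" using fsurj by blast
      have "\<forall>a\<in>Tr. collinear L a y" using w y col_iff TP by blast
      then show "w \<in> f ` {w\<in>P. \<forall>a\<in>Tr. collinear L a w}" using y by blast
    qed
  qed
  then show ?thesis using S.perp_set_eq[OF TP] T.perp_set_eq[OF fTP] by simp
qed

lemma calL_intro:
  assumes "(x,u) \<in> CP" "(a,b) \<in> CP" "(z,c) \<in> CP" "x\<noteq>a" "x\<noteq>z" "a\<noteq>z"
    "{x,a,z} \<in> L \<or> complete_triad P L {x,a,z}" "u\<noteq>b" "u\<noteq>c" "b\<noteq>c"
    "{u,b,c} = perp_set P' L' (f ` {x,a,z})"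
  shows "{(x,u),(a,b),(z,c)} \<in> calL f P L P' L'"
  unfolding calL_def
  apply (rule CollectI)
  apply (rule exI[of _ x], rule exI[of _ a], rule exI[of _ z], rule exI[of _ u], rule exI[of _ b], rule exI[of _ c])
  using assms by simp

lemma coll_sym_gen: "collinear X p q \<Longrightarrow> collinear X q p" unfolding collinear_def by blast

lemma edgeI: assumes "p\<in>BP" "q\<in>BP" "p\<noteq>q" "ln\<in>BL" "p\<in>ln" "q\<in>ln" shows "(p,q) \<in> E"
proof -
  have "collinear BL p q" unfolding collinear_def using assms by blast
  then show ?thesis unfolding coll_graph_def using assms by simp
qed

lemma E_sym: assumes "(p,q) \<in> E" shows "(q,p) \<in> E"
proof -
  have "p\<in>BP" "q\<in>BP" "p\<noteq>q" "collinear BL p q" using assms unfolding coll_graph_def by simp_all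
  then show ?thesis unfolding coll_graph_def using coll_sym_gen by simp
qed

lemma BPair_in: "(x,u) \<in> CP \<Longrightarrow> BPair x u \<in> BP"
  unfolding bbP_def by (rule UnI1, rule UnI1, rule rev_image_eqI[of "(x,u)"]) simp_all
lemma BLeft_in: "x \<in> P \<Longrightarrow> BLeft x \<in> BP" unfolding bbP_def by (rule UnI1, rule UnI2, rule imageI)
lemma BRight_in: "u \<in> P' \<Longrightarrow> BRight u \<in> BP" unfolding bbP_def by (rule UnI2, rule imageI)

lemma calL_edge: assumes "{(x,u),(a,b),(z,c)} \<in> calL f P L P' L'" "(x,u) \<in> CP" "(a,b) \<in> CP" "u \<noteq> b"
  shows "(BPair x u, BPair a b) \<in> E"
proof -
  let ?ln = "(\<lambda>(x, y). BPair x y) ` {(x,u),(a,b),(z,c)}"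
  have "?ln \<in> BL" unfolding bbL_def by (rule UnI1, rule imageI, rule assms(1))
  moreover have "BPair x u \<in> ?ln" by (rule rev_image_eqI[of "(x,u)"]) simp_all
  moreover have "BPair a b \<in> ?ln" by (rule rev_image_eqI[of "(a,b)"]) simp_all
  moreover have "BPair x u \<noteq> BPair a b" using assms(4) by simp
  ultimately show ?thesis using edgeI BPair_in assms(2,3) by blast
qed

lemma special_line: "(x,u) \<in> CP \<Longrightarrow> {BLeft x, BPair x u, BRight u} \<in> BL"
  unfolding bbL_def
  apply (rule UnI2)
  apply (rule CollectI)
  apply (rule exI[of _ x], rule exI[of _ u])
  by simp

lemma eLP: "(x,u) \<in> CP \<Longrightarrow> (BLeft x, BPair x u) \<in> E"
  using edgeI[OF BLeft_in BPair_in _ special_line] calP_iff by auto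
lemma eLR: "(x,u) \<in> CP \<Longrightarrow> (BLeft x, BRight u) \<in> E"
  using edgeI[OF BLeft_in BRight_in _ special_line] calP_iff by auto
lemma ePR: "(x,u) \<in> CP \<Longrightarrow> (BPair x u, BRight u) \<in> E"
  using edgeI[OF BPair_in BRight_in _ special_line] calP_iff by auto
lemma ePL: "(x,u) \<in> CP \<Longrightarrow> (BPair x u, BLeft x) \<in> E" using eLP E_sym by blast
lemma eRL: "(x,u) \<in> CP \<Longrightarrow> (BRight u, BLeft x) \<in> E" using eLR E_sym by blast
lemma eRP: "(x,u) \<in> CP \<Longrightarrow> (BRight u, BPair x u) \<in> E" using ePR E_sym by blast


lemma pair_adj:
  assumes x: "x\<in>P" and a: "a\<in>P" and xa: "x\<noteq>a" and u: "u\<in>P'" and b: "b\<in>P'" and ub: "u\<noteq>b"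
    and xu: "collinear L' (f x) u" and au: "collinear L' (f a) u"
    and xb: "collinear L' (f x) b" and ab: "collinear L' (f a) b"
  shows "(BPair x u, BPair a b) \<in> E"
proof -
  have cxu: "(x,u) \<in> CP" using calP_iff x u xu by blast
  have cab: "(a,b) \<in> CP" using calP_iff a b ab by blast
  have fxa: "f x \<noteq> f a" using finj x a xa by (metis inj_onD)
  have fxP: "f x \<in> P'" using fP x by blast
  have faP: "f a \<in> P'" using fP a by blast
  show ?thesis
  proof (cases "collinear L x a")
    case True
    then obtain l where l: "l\<in>L" "x\<in>l" "a\<in>l" using S.col_obtain by blast
    obtain z where z: "z\<in>l" "z\<noteq>x" "z\<noteq>a" using S.card3_third[OF S.line_card[OF l(1)]] by blast
    have leq: "l = {x,a,z}" using S.card3_eq[OF S.line_card[OF l(1)]] l z xa by blast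
    have zP: "z \<in> P" using z l S.line_sub by blast
    define l' where "l' = f ` l"
    have l'L: "l' \<in> L'" using line_img l unfolding l'_def by blast
    have fxl: "f x \<in> l'" "f a \<in> l'" "f z \<in> l'" using l z unfolding l'_def by blast+
    have ul: "u \<in> l'" using T.perp_pair_line[OF l'L fxa fxl(1,2)] xu au T.col_sym by blast
    have bl: "b \<in> l'" using T.perp_pair_line[OF l'L fxa fxl(1,2)] xb ab T.col_sym by blast
    obtain c where c: "c\<in>l'" "c\<noteq>u" "c\<noteq>b" using T.card3_third[OF T.line_card[OF l'L]] by blast
    have l'eq: "l' = {u,b,c}" using T.card3_eq[OF T.line_card[OF l'L]] ul bl c ub by blast
    have cP: "c \<in> P'" using c l'L T.line_sub by blast
    have czc: "(z,c) \<in> CP" using calP_iff zP cP T.col_line[OF l'L fxl(3) c(1)] by blast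
    have "perp_set P' L' (f ` {x,a,z}) = {u,b,c}" using T.perp_set_line[OF l'L] l'eq leq unfolding l'_def by simp
    then have "{(x,u),(a,b),(z,c)} \<in> calL f P L P' L'"
      using calL_intro[OF cxu cab czc xa] z l leq ub c by simp
    then show ?thesis using calL_edge cxu cab ub by blast
  next
    case False
    have nXA: "\<not> collinear L' (f x) (f a)" using False col_iff x a by blast
    define N where "N = {w. collinear L' (f x) w \<and> collinear L' (f a) w}"
    have Nc: "card N = 3" using T.nbr_card[OF fxP faP nXA] unfolding N_def .
    have uN: "u \<in> N" "b \<in> N" using xu au xb ab unfolding N_def by blast+
    obtain c where c: "c\<in>N" "c\<noteq>u" "c\<noteq>b" using T.card3_third[OF Nc] by blast
    have Neq: "N = {u,b,c}" using T.card3_eq[OF Nc] uN c ub by blast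
    have cx: "collinear L' (f x) c" "collinear L' (f a) c" using c unfolding N_def by blast+
    have cP: "c \<in> P'" using cx T.col_P2 by blast
    have nub: "\<not> collinear L' u b"
      using T.noncol_common[OF nXA _ _ _ _ ub] xu au xb ab T.col_sym by blast
    define M where "M = {w. collinear L' u w \<and> collinear L' b w}"
    have Mc: "card M = 3" using T.nbr_card[OF u b nub] unfolding M_def .
    obtain Z where Z: "Z\<in>M" "Z\<noteq>f x" "Z\<noteq>f a" using T.card3_third[OF Mc] by blast
    have Zu: "collinear L' Z u" "collinear L' Z b" using Z unfolding M_def using T.col_sym by blast+
    have nZX: "\<not> collinear L' Z (f x)"
      using T.noncol_common[OF nub _ _ _ _ Z(2)] Zu xu xb T.col_sym by blast
    have nZA: "\<not> collinear L' Z (f a)"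
      using T.noncol_common[OF nub _ _ _ _ Z(3)] Zu au ab T.col_sym by blast
    have Zc: "collinear L' Z c"
      using T.regular[OF nXA _ _ _ _ _ _ ub c(2)[symmetric] c(3)[symmetric] nZX nZA Zu] xu au xb ab cx T.col_sym
      by blast
    have ZP: "Z \<in> P'" using Zu T.col_P1 by blast
    obtain z where z: "z\<in>P" "f z = Z" using fsurj ZP by blast
    have zx: "z \<noteq> x" using z Z by blast
    have za: "z \<noteq> a" using z Z by blast
    have nzx: "\<not> collinear L z x" using col_iff[OF z(1) x] nZX z by simp
    have nza: "\<not> collinear L z a" using col_iff[OF z(1) a] nZA z by simp
    have TP: "{x,a,z} \<subseteq> P" using x a z by blast
    have img: "f ` {x,a,z} = {f x, f a, Z}" using z by simp
    have ps: "perp_set P' L' (f ` {x,a,z}) = {u,b,c}"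
    proof -
      have sub: "{f x, f a, Z} \<subseteq> P'" using fxP faP ZP by blast
      have "{w\<in>P'. \<forall>q\<in>{f x, f a, Z}. collinear L' q w} = {u,b,c}"
      proof
        show "{w\<in>P'. \<forall>q\<in>{f x, f a, Z}. collinear L' q w} \<subseteq> {u,b,c}"
          using Neq unfolding N_def by blast
      next
        show "{u,b,c} \<subseteq> {w\<in>P'. \<forall>q\<in>{f x, f a, Z}. collinear L' q w}"
          using u b cP xu au xb ab cx Zu Zc T.col_sym by blast
      qed
      then show ?thesis using T.perp_set_eq[OF sub] img by simp
    qed
    have card3: "card {x,a,z} = 3" using xa zx za by simp
    have tri: "triad P L {x,a,z}" unfolding triad_def
      using TP card3 False nzx nza S.col_sym by blast
    have "card (f ` perp_set P L {x,a,z}) = card (perp_set P L {x,a,z})"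
    proof (rule card_image)
      show "inj_on f (perp_set P L {x,a,z})" using finj unfolding perp_set_def
        by (rule inj_on_subset) blast
    qed
    moreover have "card (f ` perp_set P L {x,a,z}) = 3"
      using perp_set_img[OF TP] ps c ub by simp
    ultimately have "card (perp_set P L {x,a,z}) = 3" by simp
    then have ct: "complete_triad P L {x,a,z}" using tri unfolding complete_triad_def by blast
    have czc: "(z,c) \<in> CP" using calP_iff z cP Zc by blast
    have "{(x,u),(a,b),(z,c)} \<in> calL f P L P' L'"
      using calL_intro[OF cxu cab czc xa zx[symmetric] za[symmetric] _ ub c(2)[symmetric] c(3)[symmetric]] ct ps
      by blast
    then show ?thesis using calL_edge cxu cab ub by blast
  qed
qed


lemma BL_cases: assumes "ln \<in> BL"
  shows "(\<exists>S. ln = (\<lambda>(x,y). BPair x y) ` S) \<or> (\<exists>x u. ln = {BLeft x, BPair x u, BRight u} \<and> (x,u)\<in>CP)"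
  using assms unfolding bbL_def
proof (rule UnE)
  assume "ln \<in> (\<lambda>S. (\<lambda>(x, y). BPair x y) ` S) ` calL f P L P' L'"
  then show ?thesis by (rule imageE) blast
next
  assume "ln \<in> {{BLeft x, BPair x u, BRight u} | x u. (x, u) \<in> CP}"
  then show ?thesis by blast
qed

lemma BP_cases: assumes "p \<in> BP"
  shows "(\<exists>x u. p = BPair x u \<and> (x,u)\<in>CP) \<or> (\<exists>x\<in>P. p = BLeft x) \<or> (\<exists>u\<in>P'. p = BRight u)"
  using assms unfolding bbP_def
proof (elim UnE)
  assume "p \<in> (\<lambda>(x, y). BPair x y) ` CP"
  then obtain q where "q \<in> CP" "p = (\<lambda>(x, y). BPair x y) q" by (rule imageE)
  then show ?thesis by (cases q) auto
qed blast+

lemma E_dest: assumes "(p,q) \<in> E" shows "p \<noteq> q" "\<exists>ln\<in>BL. p\<in>ln \<and> q\<in>ln"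
  using assms unfolding coll_graph_def collinear_def by simp_all

lemma notin_pairs: "BLeft x \<notin> (\<lambda>(x,y). BPair x y) ` S" "BRight u \<notin> (\<lambda>(x,y). BPair x y) ` S"
  by auto

lemma nbrL: assumes "(BLeft x, c) \<in> E"
  shows "(\<exists>v. c = BPair x v \<and> (x,v)\<in>CP) \<or> (\<exists>v. c = BRight v \<and> (x,v)\<in>CP)"
proof -
  obtain ln where ln: "ln\<in>BL" "BLeft x \<in> ln" "c \<in> ln" using E_dest[OF assms] by blast
  have cn: "c \<noteq> BLeft x" using E_dest(1)[OF assms] by (rule not_sym)
  from BL_cases[OF ln(1)] show ?thesis
  proof
    assume "\<exists>S. ln = (\<lambda>(x,y). BPair x y) ` S"
    then obtain S where "ln = (\<lambda>(x,y). BPair x y) ` S" by blast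
    then show ?thesis using ln(2) notin_pairs(1)[of x S] notin_pairs(2)[of u S] by simp
  next
    assume "\<exists>x u. ln = {BLeft x, BPair x u, BRight u} \<and> (x,u)\<in>CP"
    then obtain x' u' where l: "ln = {BLeft x', BPair x' u', BRight u'}" "(x',u')\<in>CP" by blast
    have "x' = x" using ln(2) l by simp
    then have "c = BPair x u' \<or> c = BRight u'" using ln(3) cn l(1) by simp
    then show ?thesis using l(2) \<open>x' = x\<close> by blast
  qed
qed

lemma nbrR: assumes "(c, BRight u) \<in> E"
  shows "(\<exists>y. c = BPair y u \<and> (y,u)\<in>CP) \<or> (\<exists>y. c = BLeft y \<and> (y,u)\<in>CP)"
proof -
  obtain ln where ln: "ln\<in>BL" "BRight u \<in> ln" "c \<in> ln" using E_dest[OF assms] by blast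
  have cn: "c \<noteq> BRight u" using E_dest(1)[OF assms] .
  from BL_cases[OF ln(1)] show ?thesis
  proof
    assume "\<exists>S. ln = (\<lambda>(x,y). BPair x y) ` S"
    then obtain S where "ln = (\<lambda>(x,y). BPair x y) ` S" by blast
    then show ?thesis using ln(2) notin_pairs(1)[of x S] notin_pairs(2)[of u S] by simp
  next
    assume "\<exists>x u. ln = {BLeft x, BPair x u, BRight u} \<and> (x,u)\<in>CP"
    then obtain x' u' where l: "ln = {BLeft x', BPair x' u', BRight u'}" "(x',u')\<in>CP" by blast
    have "u' = u" using ln(2) l by simp
    then have "c = BPair x' u \<or> c = BLeft x'" using ln(3) cn l(1) by auto
    then show ?thesis using l(2) \<open>u' = u\<close> by blast
  qed
qed

lemma lower: assumes x: "x\<in>P" and u: "u\<in>P'" and n: "\<not> collinear L' (f x) u"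
  shows "\<not> dist_le E 2 (BLeft x) (BRight u)"
proof
  have nc: "(x,u) \<notin> CP" using calP_iff n by blast
  assume "dist_le E 2 (BLeft x) (BRight u)"
  then obtain k where k: "k \<le> 2" "(BLeft x, BRight u) \<in> E ^^ k" unfolding dist_le_def by blast
  have "k = 0 \<or> k = Suc 0 \<or> k = Suc (Suc 0)" using k(1) by arith
  then show False
  proof (elim disjE)
    assume "k = 0" then show False using k by simp
  next
    assume "k = Suc 0"
    then have "(BLeft x, BRight u) \<in> E" using k by simp
    from nbrL[OF this] show False using nc by auto
  next
    assume "k = Suc (Suc 0)"
    then have "(BLeft x, BRight u) \<in> E ^^ Suc (Suc 0)" using k by simp
    then obtain c where c1: "(BLeft x, c) \<in> E ^^ Suc 0" and c2: "(c, BRight u) \<in> E" by (rule relpow_Suc_E)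
    have c1': "(BLeft x, c) \<in> E" using c1 by simp
    from nbrL[OF c1'] show False
    proof (elim disjE exE conjE)
      fix v assume v: "c = BPair x v" "(x,v)\<in>CP"
      from nbrR[OF c2] show False
      proof (elim disjE exE conjE)
        fix y assume "c = BPair y u" "(y,u)\<in>CP"
        then show False using v nc by simp
      next
        fix y assume "c = BLeft y" then show False using v by simp
      qed
    next
      fix v assume v: "c = BRight v" "(x,v)\<in>CP"
      from nbrR[OF c2] show False
      proof (elim disjE exE conjE)
        fix y assume "c = BPair y u" then show False using v by simp
      next
        fix y assume "c = BLeft y" then show False using v by simp
      qed
    qed
  qed
qed

end

lemma dist_sym_pow:
  assumes sym: "\<And>p q. (p,q)\<in>E \<Longrightarrow> (q,p)\<in>E"
  shows "(a,b) \<in> E ^^ k \<Longrightarrow> (b,a) \<in> E ^^ k"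
proof (induction k arbitrary: b)
  case 0 then show ?case by simp
next
  case (Suc k)
  from Suc.prems obtain c where c: "(a,c) \<in> E ^^ k" "(c,b) \<in> E" by (rule relpow_Suc_E)
  have "(c,a) \<in> E ^^ k" using Suc.IH c(1) .
  moreover have "(b,c) \<in> E" using sym c(2) .
  ultimately show ?case by (rule relpow_Suc_I2[rotated])
qed

lemma dist_le_sym: assumes "\<And>p q. (p,q)\<in>E \<Longrightarrow> (q,p)\<in>E" "dist_le E n a b" shows "dist_le E n b a"
  using assms(2) dist_sym_pow[OF assms(1)] unfolding dist_le_def by blast

lemma w0: "dist_le E 3 a a" unfolding dist_le_def
  by (rule exI[of _ 0]) simp

lemma w1: "(a,b)\<in>E \<Longrightarrow> dist_le E 3 a b" unfolding dist_le_def
  by (rule exI[of _ "Suc 0"]) simp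

lemma w2: assumes "(a,b)\<in>E" "(b,c)\<in>E" shows "dist_le E 3 a c"
proof -
  have "(a,c) \<in> E ^^ Suc (Suc 0)" by (rule relpow_Suc_I[OF relpow_Suc_I[OF relpow_0_I assms(1)] assms(2)])
  then show ?thesis unfolding dist_le_def by (intro exI[of _ "Suc (Suc 0)"]) simp
qed

lemma w3: assumes "(a,b)\<in>E" "(b,c)\<in>E" "(c,d)\<in>E" shows "dist_le E 3 a d"
proof -
  have "(a,d) \<in> E ^^ Suc (Suc (Suc 0))"
    by (rule relpow_Suc_I[OF relpow_Suc_I[OF relpow_Suc_I[OF relpow_0_I assms(1)] assms(2)] assms(3)])
  then show ?thesis unfolding dist_le_def by (intro exI[of _ "Suc (Suc (Suc 0))"]) simp
qed

context two
begin

lemma uLL: assumes x: "x\<in>P" and y: "y\<in>P" shows "dist_le E 3 (BLeft x) (BLeft y)"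
proof -
  obtain w where w: "collinear L' (f x) w" "collinear L' (f y) w" using T.two_point[OF fP[OF x] fP[OF y]] by blast
  have wP: "w\<in>P'" using w T.col_P2 by blast
  have "(x,w)\<in>CP" "(y,w)\<in>CP" using calP_iff x y wP w by blast+
  then show ?thesis using w2[OF eLR eRL] by blast
qed

lemma uRR: assumes u: "u\<in>P'" and v: "v\<in>P'" shows "dist_le E 3 (BRight u) (BRight v)"
proof -
  obtain w where w: "collinear L' u w" "collinear L' v w" using T.two_point[OF u v] by blast
  have wP: "w\<in>P'" using w T.col_P2 by blast
  obtain y where y: "y\<in>P" "f y = w" using fsurj wP by blast
  have "(y,u)\<in>CP" "(y,v)\<in>CP" using calP_iff y u v w T.col_sym by auto
  then show ?thesis using w2[OF eRL eLR] by blast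
qed

lemma uLR: assumes x: "x\<in>P" and v: "v\<in>P'" shows "dist_le E 3 (BLeft x) (BRight v)"
proof -
  obtain w where w: "collinear L' (f x) w" "collinear L' v w" using T.two_point[OF fP[OF x] v] by blast
  have wP: "w\<in>P'" using w T.col_P2 by blast
  obtain y where y: "y\<in>P" "f y = v" using fsurj v by blast
  have c1: "(x,w)\<in>CP" using calP_iff x wP w by blast
  have c2: "(y,w)\<in>CP" using calP_iff y wP w by auto
  have c3: "(y,v)\<in>CP" using calP_iff y v T.col_refl by auto
  show ?thesis using w3[OF eLR[OF c1] eRL[OF c2] eLR[OF c3]] .
qed

lemma uPL: assumes xu: "(x,u)\<in>CP" and y: "y\<in>P" shows "dist_le E 3 (BPair x u) (BLeft y)"
proof -
  have x: "x\<in>P" using xu calP_iff by blast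
  obtain w where w: "collinear L' (f x) w" "collinear L' (f y) w" using T.two_point[OF fP[OF x] fP[OF y]] by blast
  have wP: "w\<in>P'" using w T.col_P2 by blast
  have c1: "(x,w)\<in>CP" using calP_iff x wP w by blast
  have c2: "(y,w)\<in>CP" using calP_iff y wP w by blast
  show ?thesis using w3[OF ePL[OF xu] eLR[OF c1] eRL[OF c2]] .
qed

lemma uPR: assumes xu: "(x,u)\<in>CP" and v: "v\<in>P'" shows "dist_le E 3 (BPair x u) (BRight v)"
proof -
  have u: "u\<in>P'" using xu calP_iff by blast
  obtain w where w: "collinear L' u w" "collinear L' v w" using T.two_point[OF u v] by blast
  have wP: "w\<in>P'" using w T.col_P2 by blast
  obtain z where z: "z\<in>P" "f z = w" using fsurj wP by blast
  have c1: "(z,u)\<in>CP" using calP_iff z u w T.col_sym by auto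
  have c2: "(z,v)\<in>CP" using calP_iff z v w T.col_sym by auto
  show ?thesis using w3[OF ePR[OF xu] eRL[OF c1] eLR[OF c2]] .
qed

lemma uPP: assumes xu: "(x,u)\<in>CP" and yv: "(y,v)\<in>CP" shows "dist_le E 3 (BPair x u) (BPair y v)"
proof -
  have x: "x\<in>P" and u: "u\<in>P'" and cxu: "collinear L' (f x) u" using xu calP_iff by blast+
  have y: "y\<in>P" and v: "v\<in>P'" and cyv: "collinear L' (f y) v" using yv calP_iff by blast+
  show ?thesis
  proof (cases "x = y")
    case True
    then have "(x,v)\<in>CP" using yv by simp
    then show ?thesis using w2[OF ePL[OF xu] eLP] True by simp
  next
    case xy: False
    show ?thesis
    proof (cases "u = v")
      case True
      then have "(y,u)\<in>CP" using yv by simp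
      then show ?thesis using w2[OF ePR[OF xu] eRP] True by simp
    next
      case uv: False
      show ?thesis
      proof (cases "collinear L' (f x) v")
        case True
        then have "(x,v)\<in>CP" using calP_iff x v by blast
        then show ?thesis using w3[OF ePL[OF xu] eLR eRP[OF yv]] by blast
      next
        case nxv: False
        show ?thesis
        proof (cases "collinear L' (f y) u")
          case True
          then have "(y,u)\<in>CP" using calP_iff y u by blast
          then show ?thesis using w3[OF ePR[OF xu] eRL eLP[OF yv]] by blast
        next
          case nyu: False
          obtain b where b: "collinear L' (f x) b" "collinear L' (f y) b"
            using T.two_point[OF fP[OF x] fP[OF y]] by blast
          have bP: "b\<in>P'" using b T.col_P2 by blast
          obtain a' where a': "collinear L' a' u" "collinear L' a' v" "collinear L' a' b"
            using T.three_point[OF u v bP] by blast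
          have a'P: "a'\<in>P'" using a' T.col_P1 by blast
          obtain a where a: "a\<in>P" "f a = a'" using fsurj a'P by blast
          have ax: "x \<noteq> a" using a a' nxv by blast
          have ay: "a \<noteq> y" using a a' nyu by blast
          have ub: "u \<noteq> b" using b nyu by blast
          have bv: "b \<noteq> v" using b nxv by blast
          have e1: "(BPair x u, BPair a b) \<in> E"
            using pair_adj[OF x a(1) ax u bP ub cxu _ b(1)] a a' T.col_sym by blast
          have e2: "(BPair a b, BPair y v) \<in> E"
            using pair_adj[OF a(1) y ay bP v bv _ b(2) _ cyv] a a' T.col_sym by blast
          show ?thesis using w2[OF e1 e2] .
        qed
      qed
    qed
  qed
qed

lemma upper: assumes p: "p\<in>BP" and q: "q\<in>BP" shows "dist_le E 3 p q"
proof -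
  have sy: "dist_le E 3 b a" if "dist_le E 3 a b" for a b using dist_le_sym[OF E_sym that] .
  from BP_cases[OF p] show ?thesis
  proof (elim disjE exE conjE bexE)
    fix x u assume pp: "p = BPair x u" "(x,u)\<in>CP"
    from BP_cases[OF q] show ?thesis
    proof (elim disjE exE conjE bexE)
      fix y v assume qq: "q = BPair y v" "(y,v)\<in>CP" show ?thesis unfolding pp(1) qq(1) by (rule uPP[OF pp(2) qq(2)])
    next
      fix y assume qq: "y\<in>P" "q = BLeft y" show ?thesis unfolding pp(1) qq(2) by (rule uPL[OF pp(2) qq(1)])
    next
      fix v assume qq: "v\<in>P'" "q = BRight v" show ?thesis unfolding pp(1) qq(2) by (rule uPR[OF pp(2) qq(1)])
    qed
  next
    fix x assume pp: "x\<in>P" "p = BLeft x"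
    from BP_cases[OF q] show ?thesis
    proof (elim disjE exE conjE bexE)
      fix y v assume qq: "q = BPair y v" "(y,v)\<in>CP" show ?thesis unfolding pp(2) qq(1) by (rule sy[OF uPL[OF qq(2) pp(1)]])
    next
      fix y assume qq: "y\<in>P" "q = BLeft y" show ?thesis unfolding pp(2) qq(2) by (rule uLL[OF pp(1) qq(1)])
    next
      fix v assume qq: "v\<in>P'" "q = BRight v" show ?thesis unfolding pp(2) qq(2) by (rule uLR[OF pp(1) qq(1)])
    qed
  next
    fix x assume pp: "x\<in>P'" "p = BRight x"
    from BP_cases[OF q] show ?thesis
    proof (elim disjE exE conjE bexE)
      fix y v assume qq: "q = BPair y v" "(y,v)\<in>CP" show ?thesis unfolding pp(2) qq(1) by (rule sy[OF uPR[OF qq(2) pp(1)]])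
    next
      fix y assume qq: "y\<in>P" "q = BLeft y" show ?thesis unfolding pp(2) qq(2) by (rule sy[OF uLR[OF qq(1) pp(1)]])
    next
      fix v assume qq: "v\<in>P'" "q = BRight v" show ?thesis unfolding pp(2) qq(2) by (rule uRR[OF pp(1) qq(1)])
    qed
  qed
qed

end

theorem corollary4p5:
  fixes P :: "'a set" and L :: "'a set set" and P' :: "'b set" and L' :: "'b set set"
    and f :: "'a \<Rightarrow> 'b"
  assumes "gq22 P L" and "gq22 P' L'" and "gq_iso f P L P' L'"
  shows "graph_connected (bbP f P P' L') (coll_graph (bbP f P P' L') (bbL f P L P' L'))
       \<and> graph_diameter (bbP f P P' L') (coll_graph (bbP f P P' L') (bbL f P L P' L')) 3"
proof -
  interpret two P L P' L' f using assms by (simp add: two_def two_axioms_def gq_def)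
  have up: "\<forall>a\<in>BP. \<forall>b\<in>BP. dist_le E 3 a b" using upper by blast
  have conn: "graph_connected BP E"
    unfolding graph_connected_def
  proof (intro ballI)
    fix a b assume "a\<in>BP" "b\<in>BP"
    then obtain k where "(a,b) \<in> E ^^ k" using up unfolding dist_le_def by blast
    then show "(a,b) \<in> E\<^sup>*" by (rule relpow_imp_rtrancl)
  qed
  obtain x where x: "x\<in>P" using assms(1) unfolding gq22_def by blast
  obtain u where u: "u\<in>P'" "\<not> collinear L' (f x) u" using T.noncol_exists[OF fP[OF x]] by blast
  have "\<not> dist_le E 2 (BLeft x) (BRight u)" using lower[OF x u] .
  then have low: "\<exists>a\<in>BP. \<exists>b\<in>BP. \<not> dist_le E (3 - 1) a b"
    using BLeft_in[OF x] BRight_in[OF u(1)] by auto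
  show ?thesis using conn up low unfolding graph_diameter_def by blast
qed

end
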